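(* Let $K>0$, let $m_1,m_2\in(0,1]$, and let $f,g:[0,K]\to[0,\infty)$ be such that $f$ is $m_1$-convex and $g$ is $m_2$-convex on $[0,K]$. Let $0\le a<b\le K$ with $a/m_1\le K$ and $a/m_2\le K$, and assume $f,g\in L^1[a,b]$. Then \[ \frac{1}{b-a}\int_a^b f(x)^{\frac{x-a}{b-a}}\, g(x)^{\frac{b-x}{b-a}}\,dx \le \frac13\left[f(b)+m_2\, g\!\left(\frac{a}{m_2}\right)\right]+\frac16\left[g(b)+m_1\, f\!\left(\frac{a}{m_1}\right)\right]. \]
   Context: For $m\in[0,1]$ and $K>0$, a function $h:[0,K]\to\mathbb{R}$ is called $m$-convex if $h(tx+m(1-t)y)\le t\,h(x)+m(1-t)\,h(y)$ for all $x,y\in[0,K]$ and $t\in[0,1]$. The convention $0^0=1$ is used in the integrand. *)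

theory Defs
  imports "HOL-Analysis.Analysis"
begin

definition m_convex_on :: "real \<Rightarrow> real \<Rightarrow> (real \<Rightarrow> real) \<Rightarrow> bool" where
  "m_convex_on K m h \<longleftrightarrow>
     (\<forall>x\<in>{0..K}. \<forall>y\<in>{0..K}. \<forall>t\<in>{0..1}.
        h (t * x + m * (1 - t) * y) \<le> t * h x + m * (1 - t) * h y)"

definition rpow :: "real \<Rightarrow> real \<Rightarrow> real" where
  "rpow x y = (if x = 0 then (if y = 0 then 1 else 0) else x powr y)"

end

theory Submission
  imports Defs
begin

lemma rpow_amgm:
  fixes u v al be :: real
  assumes "0 \<le> u" "0 \<le> v" "0 \<le> al" "0 \<le> be" "al + be = 1"
  shows "rpow u al * rpow v be \<le> al * u + be * v"
proof (cases "u = 0")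
  case True
  show ?thesis
  proof (cases "al = 0")
    case True
    with assms \<open>u = 0\<close> show ?thesis by (cases "v = 0") (auto simp: rpow_def)
  next
    case False
    with assms \<open>u = 0\<close> show ?thesis by (auto simp: rpow_def)
  qed
next
  case uF: False
  show ?thesis
  proof (cases "v = 0")
    case True
    show ?thesis
    proof (cases "be = 0")
      case True
      with assms \<open>v = 0\<close> uF show ?thesis by (auto simp: rpow_def)
    next
      case False
      with assms \<open>v = 0\<close> uF show ?thesis by (auto simp: rpow_def)
    qed
  next
    case False
    with uF assms have "u > 0" "v > 0" by auto
    with Youngs_inequality_0[of al be u v] assms False uF show ?thesis by (simp add: rpow_def)
  qed
qed

theorem theorem3:
  fixes K m1 m2 a b :: real and f g :: "real \<Rightarrow> real"
  assumes "K > 0"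
    and "0 < m1" "m1 \<le> 1" and "0 < m2" "m2 \<le> 1"
    and "\<And>x. x \<in> {0..K} \<Longrightarrow> f x \<ge> 0"
    and "\<And>x. x \<in> {0..K} \<Longrightarrow> g x \<ge> 0"
    and "m_convex_on K m1 f" and "m_convex_on K m2 g"
    and "0 \<le> a" "a < b" "b \<le> K"
    and "a / m1 \<le> K" "a / m2 \<le> K"
    and "set_integrable lborel {a..b} f" and "set_integrable lborel {a..b} g"
  shows "1 / (b - a) * (LINT x:{a..b}|lborel. rpow (f x) ((x - a) / (b - a)) * rpow (g x) ((b - x) / (b - a)))
         \<le> 1/3 * (f b + m2 * g (a / m2)) + 1/6 * (g b + m1 * f (a / m1))"
proof -
  define A where "A = f b"
  define B where "B = m1 * f (a / m1)"
  define C where "C = g b"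
  define D where "D = m2 * g (a / m2)"
  define h where "h = (\<lambda>x. rpow (f x) ((x - a) / (b - a)) * rpow (g x) ((b - x) / (b - a)))"
  define P where "P = (\<lambda>x. ((x - a) / (b - a))^2 * A + ((x - a) / (b - a)) * ((b - x) / (b - a)) * (B + C)
                        + ((b - x) / (b - a))^2 * D)"
  define V where "V = (b - a) * (A / 3 + (B + C) / 6 + D / 3)"
  have ab: "b - a > 0" using assms by simp
  have a1K: "a / m1 \<in> {0..K}" using assms by auto
  have a2K: "a / m2 \<in> {0..K}" using assms by auto
  have bK: "b \<in> {0..K}" using assms by auto
  have nn: "A \<ge> 0" "B \<ge> 0" "C \<ge> 0" "D \<ge> 0"
    using assms(6)[OF bK] assms(6)[OF a1K] assms(7)[OF bK] assms(7)[OF a2K] assms(2,4)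
    by (auto simp: A_def B_def C_def D_def)
  have pt: "h x \<le> P x" if x: "x \<in> {a..b}" for x
  proof -
    define t where "t = (x - a) / (b - a)"
    have t01: "0 \<le> t" "t \<le> 1" using x ab by (auto simp: t_def field_simps)
    have omt: "(b - x) / (b - a) = 1 - t" using ab by (simp add: t_def field_simps)
    have xK: "x \<in> {0..K}" using x assms by auto
    have tba: "t * (b - a) = x - a" using ab by (simp add: t_def)
    have xeq: "x = t * b + (1 - t) * a" using tba by (simp add: algebra_simps)
    have fx: "f x \<le> t * A + m1 * (1 - t) * f (a / m1)"
    proof -
      have "x = t * b + m1 * (1 - t) * (a / m1)" using xeq assms(2) by simp
      then show ?thesis using assms(8) bK a1K t01 unfolding m_convex_on_def A_def by (metis atLeastAtMost_iff)
    qed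
    have gx: "g x \<le> t * C + m2 * (1 - t) * g (a / m2)"
    proof -
      have "x = t * b + m2 * (1 - t) * (a / m2)" using xeq assms(4) by simp
      then show ?thesis using assms(9) bK a2K t01 unfolding m_convex_on_def C_def
        by (metis atLeastAtMost_iff)
    qed
    have "h x \<le> t * f x + (1 - t) * g x"
      unfolding h_def t_def[symmetric] omt
      using rpow_amgm[of "f x" "g x" t "1 - t"] assms(6,7)[OF xK] t01 by simp
    also have "\<dots> \<le> t * (t * A + m1 * (1 - t) * f (a / m1)) + (1 - t) * (t * C + m2 * (1 - t) * g (a / m2))"
      using fx gx t01 by (intro add_mono mult_left_mono) auto
    also have "\<dots> = P x"
      unfolding P_def t_def[symmetric] omt B_def D_def by (simp add: algebra_simps power2_eq_square)
    finally show ?thesis .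
  qed
  have Pcont: "continuous_on {a..b} P" unfolding P_def using ab by (intro continuous_intros) auto
  have Pint: "set_integrable lborel {a..b} P" by (rule borel_integrable_atLeastAtMost'[OF Pcont])
  define F where "F = (\<lambda>x. (b - a) * (A * ((x - a) / (b - a))^3 / 3
        + (B + C) * (((x - a) / (b - a))^2 / 2 - ((x - a) / (b - a))^3 / 3)
        - D * ((b - x) / (b - a))^3 / 3))"
  have deriv: "(F has_vector_derivative P x) (at x within {a..b})" for x
    unfolding F_def P_def has_real_derivative_iff_has_vector_derivative[symmetric]
    apply (rule DERIV_cong)
    using ab apply (auto intro!: derivative_eq_intros)
    apply (subgoal_tac "b - a \<noteq> 0")
     apply (simp add: divide_simps power2_eq_square power3_eq_cube)
     apply (simp add: algebra_simps)
    apply simp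
    done
  have "(P has_integral (F b - F a)) {a..b}"
    using fundamental_theorem_of_calculus[of a b F P] deriv assms(11) by auto
  moreover have "F b - F a = V" using ab unfolding F_def V_def by (simp add: field_simps)
  ultimately have "(P has_integral V) {a..b}" by simp
  then have LP: "(LINT x:{a..b}|lborel. P x) = V"
    using set_borel_integral_eq_integral(2)[OF Pint] by (simp add: integral_unique)
  have "(LINT x:{a..b}|lborel. h x) \<le> V"
  proof (cases "set_integrable lborel {a..b} h")
    case True
    then show ?thesis using set_integral_mono[OF True Pint pt] LP by simp
  next
    case False
    then have "(LINT x:{a..b}|lborel. h x) = 0"
      unfolding set_lebesgue_integral_def set_integrable_def by (simp add: not_integrable_integral_eq)
    then show ?thesis using nn ab unfolding V_def by simp
  qed
  then have "1 / (b - a) * (LINT x:{a..b}|lborel. h x) \<le> 1 / (b - a) * V"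
    using ab by (intro mult_left_mono) auto
  also have "\<dots> = 1/3 * (f b + m2 * g (a / m2)) + 1/6 * (g b + m1 * f (a / m1))"
    using ab unfolding V_def A_def B_def C_def D_def by (simp add: field_simps)
  finally show ?thesis unfolding h_def .
qed

end
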